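(* Let $n,m$ be positive integers. If the $n\times m$ board has a closed knight tour, then for all positive integers $p_1,\dots,p_r$ the $n\times m\times p_1\times\cdots\times p_r$ board has a closed knight tour.
   Context: For positive integers $n_1,\dots,n_d$, the $n_1\times\cdots\times n_d$ board is $\{1,\dots,n_1\}\times\cdots\times\{1,\dots,n_d\}\subset\mathbb{Z}^d$. A knight move is a vector in $\mathbb{Z}^d$ with exactly one coordinate in $\{\pm1\}$, exactly one coordinate in $\{\pm2\}$ and all other coordinates $0$; two cells are adjacent iff their difference is a knight move. A closed knight tour is a Hamiltonian cycle in this graph. *)

theory Defs
  imports Main
begin

definition board :: "nat list \<Rightarrow> int list set" where
  "board ns = {xs. length xs = length ns \<and>
                  (\<forall>i<length ns. 1 \<le> xs ! i \<and> xs ! i \<le> int (ns ! i))}"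

definition knight_move :: "int list \<Rightarrow> bool" where
  "knight_move v \<longleftrightarrow> (\<exists>i j. i < length v \<and> j < length v \<and> i \<noteq> j \<and>
       \<bar>v ! i\<bar> = 1 \<and> \<bar>v ! j\<bar> = 2 \<and>
       (\<forall>k<length v. k \<noteq> i \<and> k \<noteq> j \<longrightarrow> v ! k = 0))"

definition knight_adj :: "int list \<Rightarrow> int list \<Rightarrow> bool" where
  "knight_adj x y \<longleftrightarrow> length x = length y \<and> knight_move (map2 (-) y x)"

definition closed_knight_tour :: "nat list \<Rightarrow> bool" where
  "closed_knight_tour ns \<longleftrightarrow> (\<exists>cs. distinct cs \<and> set cs = board ns \<and> 3 \<le> length cs \<and>
      (\<forall>i<length cs. knight_adj (cs ! i) (cs ! ((i + 1) mod length cs))))"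

end

theory Submission
  imports Defs
begin


fun sedges :: "'a list \<Rightarrow> 'a set set" where
  "sedges (x # y # zs) = insert {x, y} (sedges (y # zs))"
| "sedges _ = {}"

definition cedges :: "'a list \<Rightarrow> 'a set set" where
  "cedges xs = insert {last xs, hd xs} (sedges xs)"

definition hcyc :: "('a \<Rightarrow> 'a \<Rightarrow> bool) \<Rightarrow> 'a set \<Rightarrow> 'a list \<Rightarrow> bool" where
  "hcyc R V xs \<longleftrightarrow> distinct xs \<and> set xs = V \<and> 3 \<le> length xs \<and> successively R xs \<and> R (last xs) (hd xs)"

lemma sedges_Cons: "sedges (x # xs) = (if xs = [] then {} else insert {x, hd xs} (sedges xs))"
  by (cases xs) auto

lemma sedges_append:
  "sedges (xs @ ys) = sedges xs \<union> sedges ys \<union> (if xs = [] \<or> ys = [] then {} else {{last xs, hd ys}})"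
  by (induction xs) (auto simp: sedges_Cons)

lemma sedges_rev: "sedges (rev xs) = sedges xs"
  by (induction xs) (auto simp: sedges_append sedges_Cons insert_commute last_rev)

lemma sedges_map: "sedges (map f xs) = (\<lambda>S. f ` S) ` sedges xs"
  by (induction xs rule: sedges.induct) auto

lemma mem_sedges_split: "E \<in> sedges xs \<Longrightarrow> \<exists>p1 u v p2. xs = p1 @ u # v # p2 \<and> E = {u, v}"
proof (induction xs rule: sedges.induct)
  case (1 x y zs)
  show ?case
  proof (cases "E = {x,y}")
    case True then show ?thesis by (rule_tac x="[]" in exI) auto
  next
    case False
    with 1 obtain p1 u v p2 where "y # zs = p1 @ u # v # p2" "E = {u,v}" by auto
    then show ?thesis by (rule_tac x="x # p1" in exI) auto
  qed
qed auto

lemma hcyc_rotate: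
  assumes "hcyc R V (xs @ ys)" "xs \<noteq> []" "ys \<noteq> []"
  shows "hcyc R V (ys @ xs) \<and> cedges (ys @ xs) = cedges (xs @ ys)"
  using assms by (auto simp: hcyc_def cedges_def sedges_append successively_append_iff)

lemma hcyc_rev:
  assumes "symp R" "hcyc R V xs"
  shows "hcyc R V (rev xs) \<and> cedges (rev xs) = cedges xs"
proof -
  have "successively R (rev xs)" using assms
    by (simp add: hcyc_def) (metis (no_types, lifting) successively_mono sympD)
  moreover have "R (last (rev xs)) (hd (rev xs))" using assms
    by (cases xs) (auto simp: hcyc_def last_rev hd_rev hd_append dest: sympD split: if_splits)
  ultimately show ?thesis using assms
    by (auto simp: hcyc_def cedges_def sedges_rev hd_rev last_rev insert_commute)
qed

lemma hcyc_reroot: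
  assumes "symp R" "hcyc R V xs" "{a, b} \<in> cedges xs"
  shows "\<exists>ys. hcyc R V ys \<and> cedges ys = cedges xs \<and> hd ys = b \<and> last ys = a"
proof (cases "{a,b} = {last xs, hd xs}")
  case True
  then consider "a = last xs" "b = hd xs" | "a = hd xs" "b = last xs" by (auto simp: doubleton_eq_iff)
  then show ?thesis
  proof cases
    case 1 then show ?thesis using assms by blast
  next
    case 2
    have ne: "xs \<noteq> []" using assms(2) by (auto simp: hcyc_def)
    show ?thesis using hcyc_rev[OF assms(1,2)] 2 ne by (auto simp: hd_rev last_rev)
  qed
next
  case False
  then have "{a,b} \<in> sedges xs" using assms(3) by (auto simp: cedges_def)
  then obtain p1 u v p2 where xs: "xs = p1 @ u # v # p2" and ab: "{a,b} = {u,v}"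
    using mem_sedges_split by blast
  have xs': "xs = (p1 @ [u]) @ (v # p2)" using xs by simp
  from hcyc_rotate[of R V "p1 @ [u]" "v # p2"] assms(2) xs'
  have r: "hcyc R V ((v # p2) @ (p1 @ [u]))" "cedges ((v # p2) @ (p1 @ [u])) = cedges xs" by auto
  from ab consider "a = u" "b = v" | "a = v" "b = u" by (auto simp: doubleton_eq_iff)
  then show ?thesis
  proof cases
    case 1 then show ?thesis using r by (intro exI[of _ "(v # p2) @ (p1 @ [u])"]) auto
  next
    case 2
    from hcyc_rev[OF assms(1) r(1)] r(2) 2 show ?thesis
      by (intro exI[of _ "rev ((v # p2) @ (p1 @ [u]))"]) auto
  qed
qed

lemma hcyc_merge:
  assumes "symp R" "hcyc R V xs" "hcyc R W ys" "V \<inter> W = {}"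
    "{a, b} \<in> cedges xs" "{c, d} \<in> cedges ys" "R a c" "R b d"
  shows "\<exists>zs. hcyc R (V \<union> W) zs \<and> cedges xs - {{a,b}} \<subseteq> cedges zs \<and> cedges ys - {{c,d}} \<subseteq> cedges zs"
proof -
  obtain xs' where x: "hcyc R V xs'" "cedges xs' = cedges xs" "hd xs' = b" "last xs' = a"
    using hcyc_reroot[OF assms(1,2,5)] by blast
  have "{d, c} \<in> cedges ys" using assms(6) by (simp add: insert_commute)
  then obtain ys' where y: "hcyc R W ys'" "cedges ys' = cedges ys" "hd ys' = c" "last ys' = d"
    using hcyc_reroot[OF assms(1,3)] by blast
  have nx: "xs' \<noteq> []" "ys' \<noteq> []" using x y by (auto simp: hcyc_def)
  have "R d b" using assms(1,8) by (auto dest: sympD)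
  have h: "hcyc R (V \<union> W) (xs' @ ys')"
    unfolding hcyc_def
  proof (intro conjI)
    show "distinct (xs' @ ys')" using x(1) y(1) assms(4) by (auto simp: hcyc_def)
    show "set (xs' @ ys') = V \<union> W" using x(1) y(1) by (auto simp: hcyc_def)
    show "3 \<le> length (xs' @ ys')" using x(1) by (simp add: hcyc_def)
    show "successively R (xs' @ ys')" using x y nx assms(7)
      by (simp add: hcyc_def successively_append_iff)
    show "R (last (xs' @ ys')) (hd (xs' @ ys'))" using x y nx \<open>R d b\<close> by simp
  qed
  have ce: "cedges (xs' @ ys') = insert {d,b} (insert {a,c} (sedges xs' \<union> sedges ys'))"
    using x y nx by (simp add: cedges_def sedges_append)
  have "cedges xs = insert {a,b} (sedges xs')" using x by (simp add: cedges_def)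
  then have "cedges xs - {{a,b}} \<subseteq> sedges xs'" by blast
  moreover have "cedges ys = insert {d,c} (sedges ys')" using y by (simp add: cedges_def)
  then have "cedges ys - {{c,d}} \<subseteq> sedges ys'" by (auto simp: insert_commute)
  ultimately show ?thesis using h ce
    by (intro exI[of _ "xs' @ ys'"]) blast
qed

lemma hcyc_degree:
  assumes "hcyc R V xs" "v \<in> V"
  shows "\<exists>u w. u \<noteq> w \<and> {v,u} \<in> cedges xs \<and> {v,w} \<in> cedges xs"
proof -
  from assms have "v \<in> set xs" by (auto simp: hcyc_def)
  then obtain p1 p2 where xs: "xs = p1 @ v # p2" by (meson split_list)
  show ?thesis
  proof (cases "p1 = []")
    case True
    then have "length p2 \<ge> 2" "distinct (v # p2)" using assms xs by (auto simp: hcyc_def)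
    then obtain u r where p2: "p2 = u # r" "r \<noteq> []" by (cases p2; cases "tl p2") auto
    have "u \<noteq> last r" using \<open>distinct (v#p2)\<close> p2 by auto
    moreover have "{v,u} \<in> cedges xs" using xs True p2 by (auto simp: cedges_def)
    moreover have "{v,last r} \<in> cedges xs" using xs True p2 by (auto simp: cedges_def)
    ultimately show ?thesis by blast
  next
    case False
    then have r: "hcyc R V ((v # p2) @ p1) \<and> cedges ((v # p2) @ p1) = cedges xs"
      using hcyc_rotate[of R V p1 "v # p2"] assms xs by auto
    then have "length (p2 @ p1) \<ge> 2" "distinct (v # p2 @ p1)" by (auto simp: hcyc_def)
    then obtain u r where p2: "p2 @ p1 = u # r" "r \<noteq> []" by (cases "p2 @ p1"; cases "tl (p2 @ p1)") auto
    have "u \<noteq> last r" using \<open>distinct (v # p2 @ p1)\<close> p2 by (metis distinct.simps(2) last_in_set)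
    moreover have "{v,u} \<in> cedges ((v # p2) @ p1)" using p2 by (simp add: cedges_def)
    then have "{v,u} \<in> cedges xs" using r by simp
    moreover have "{v,last r} \<in> cedges ((v # p2) @ p1)" using p2 by (simp add: cedges_def insert_commute)
    then have "{v,last r} \<in> cedges xs" using r by simp
    ultimately show ?thesis by blast
  qed
qed

lemma sedges_adj: "successively R xs \<Longrightarrow> {u,v} \<in> sedges xs \<Longrightarrow> R u v \<or> R v u"
  by (induction xs rule: sedges.induct) (auto simp: doubleton_eq_iff)

lemma cedges_adj: "hcyc R V xs \<Longrightarrow> {u,v} \<in> cedges xs \<Longrightarrow> R u v \<or> R v u"
  by (auto simp: hcyc_def cedges_def doubleton_eq_iff dest: sedges_adj)

lemma sedges_subset: "E \<in> sedges xs \<Longrightarrow> E \<subseteq> set xs"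
  by (induction xs rule: sedges.induct) auto

lemma cedges_subset: "xs \<noteq> [] \<Longrightarrow> E \<in> cedges xs \<Longrightarrow> E \<subseteq> set xs"
  by (auto simp: cedges_def dest: sedges_subset)



definition shift2 :: "int list \<Rightarrow> int list \<Rightarrow> bool" where
  "shift2 u w \<longleftrightarrow> length u = length w \<and> (\<exists>i<length u. \<bar>w ! i - u ! i\<bar> = 2 \<and>
      (\<forall>k<length u. k \<noteq> i \<longrightarrow> w ! k = u ! k))"

definition mpair :: "int list list \<Rightarrow> int list set \<Rightarrow> int list set \<Rightarrow> bool" where
  "mpair cs e f \<longleftrightarrow> e \<in> cedges cs \<and> f \<in> cedges cs \<and> e \<noteq> f \<and>
     (\<exists>x y x' y'. e = {x,y} \<and> f = {x',y'} \<and> shift2 x x' \<and> shift2 y y')"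

lemma map2_minus_nth: "length x = length y \<Longrightarrow> k < length x \<Longrightarrow> map2 (-) y x ! k = y ! k - x ! k"
  by simp

lemma knight_move_neg: "knight_move v \<Longrightarrow> knight_move (map uminus v)"
  unfolding knight_move_def by (metis (no_types, lifting) abs_minus_cancel length_map minus_zero nth_map)

lemma knight_adj_sym: "knight_adj x y \<Longrightarrow> knight_adj y x"
proof -
  assume h: "knight_adj x y"
  have l: "length x = length y" using h unfolding knight_adj_def by simp
  have "map2 (-) x y = map uminus (map2 (-) y x)"
    using l by (induction x y rule: list_induct2) auto
  moreover have "knight_move (map uminus (map2 (-) y x))"
    using h knight_move_neg unfolding knight_adj_def by blast
  ultimately show ?thesis using l unfolding knight_adj_def by simp
qed

lemma symp_knight: "symp knight_adj"
  by (auto intro: sympI knight_adj_sym)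

lemma knight_adj_lift: "knight_adj u w \<Longrightarrow> knight_adj (u @ [z]) (w @ [z])"
  unfolding knight_adj_def knight_move_def
  apply (clarsimp simp: nth_append)
  apply (rule_tac x=i in exI, simp)
  apply (rule_tac x=j in exI, simp)
  done

lemma shift2_cross: "shift2 u w \<Longrightarrow> \<bar>z' - z\<bar> = 1 \<Longrightarrow> knight_adj (u @ [z]) (w @ [z'])"
  unfolding knight_adj_def knight_move_def shift2_def
  apply (clarsimp simp: nth_append)
  apply (rule_tac x="length u" in exI, simp)
  apply (rule_tac x=i in exI, simp)
  done

lemma shift2_lift: "shift2 u w \<Longrightarrow> shift2 (u @ [z]) (w @ [z])"
  unfolding shift2_def
  apply (clarsimp simp: nth_append)
  apply (rule_tac x=i in exI, simp)
  done

lemma km2: "knight_move [x,y] \<longleftrightarrow> (\<bar>x\<bar> = 1 \<and> \<bar>y\<bar> = 2) \<or> (\<bar>x\<bar> = 2 \<and> \<bar>y\<bar> = 1)"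
proof
  assume "knight_move [x,y]"
  then obtain i j where ij: "i < 2" "j < 2" "i \<noteq> j" "\<bar>[x,y] ! i\<bar> = 1" "\<bar>[x,y] ! j\<bar> = 2"
    unfolding knight_move_def by (simp only: length_Cons list.size numeral_2_eq_2) (auto simp del: nth_Cons_0 nth_Cons_Suc)
  then have "(i = 0 \<and> j = 1) \<or> (i = 1 \<and> j = 0)" by auto
  then show "(\<bar>x\<bar> = 1 \<and> \<bar>y\<bar> = 2) \<or> (\<bar>x\<bar> = 2 \<and> \<bar>y\<bar> = 1)" using ij by auto
next
  assume h: "(\<bar>x\<bar> = 1 \<and> \<bar>y\<bar> = 2) \<or> (\<bar>x\<bar> = 2 \<and> \<bar>y\<bar> = 1)"
  have k: "\<forall>k<length [x,y]. k \<noteq> 0 \<and> k \<noteq> 1 \<longrightarrow> P k" for P by auto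
  from h show "knight_move [x,y]"
  proof
    assume "\<bar>x\<bar> = 1 \<and> \<bar>y\<bar> = 2"
    then show ?thesis unfolding knight_move_def
      by (intro exI[of _ 0] exI[of _ 1]) auto
  next
    assume "\<bar>x\<bar> = 2 \<and> \<bar>y\<bar> = 1"
    then show ?thesis unfolding knight_move_def
      by (intro exI[of _ 1] exI[of _ 0]) auto
  qed
qed

lemma knight_adj_2d:
  "knight_adj [a,b] [c,d] \<longleftrightarrow> (\<bar>c-a\<bar> = 1 \<and> \<bar>d-b\<bar> = 2) \<or> (\<bar>c-a\<bar> = 2 \<and> \<bar>d-b\<bar> = 1)"
  unfolding knight_adj_def by (simp add: km2)

lemma shift2_2d: "\<bar>c-a\<bar> = 2 \<Longrightarrow> shift2 [a,b] [c,b]"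
  unfolding shift2_def by (rule conjI, simp, rule exI[of _ 0]) (auto simp: less_Suc_eq nth_Cons split: nat.splits)

lemma shift2_2d': "\<bar>d-b\<bar> = 2 \<Longrightarrow> shift2 [a,b] [a,d]"
  unfolding shift2_def by (rule conjI, simp, rule exI[of _ 1]) (auto simp: less_Suc_eq nth_Cons split: nat.splits)

lemma board_2d: "xs \<in> board [n,m] \<longleftrightarrow> (\<exists>i j. xs = [i,j] \<and> 1 \<le> i \<and> i \<le> int n \<and> 1 \<le> j \<and> j \<le> int m)"
proof
  assume "xs \<in> board [n,m]"
  then have "length xs = 2" "1 \<le> xs!0" "xs!0 \<le> int n" "1 \<le> xs!1" "xs!1 \<le> int m"
    by (auto simp: board_def)
  moreover then have "xs = [xs!0, xs!1]"
    by (cases xs; cases "tl xs") auto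
  ultimately show "\<exists>i j. xs = [i,j] \<and> 1 \<le> i \<and> i \<le> int n \<and> 1 \<le> j \<and> j \<le> int m" by blast
next
  assume "\<exists>i j. xs = [i,j] \<and> 1 \<le> i \<and> i \<le> int n \<and> 1 \<le> j \<and> j \<le> int m"
  then show "xs \<in> board [n,m]" by (auto simp: board_def less_Suc_eq numeral_2_eq_2)
qed



lemma corner:
  fixes P :: "int \<Rightarrow> int \<Rightarrow> int list" and B :: "int list set"
  assumes cyc: "hcyc knight_adj B cs"
    and F1: "\<And>a b c d. P a b = P c d \<Longrightarrow> a = c \<and> b = d"
    and F2: "\<And>a b c d. knight_adj (P a b) (P c d) \<longleftrightarrow> (\<bar>c-a\<bar> = 1 \<and> \<bar>d-b\<bar> = 2) \<or> (\<bar>c-a\<bar> = 2 \<and> \<bar>d-b\<bar> = 1)"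
    and F3: "\<And>a b c. \<bar>c-a\<bar> = 2 \<Longrightarrow> shift2 (P a b) (P c b)"
    and F4: "\<And>a b. P a b \<in> B \<Longrightarrow> 0 \<le> a \<and> 0 \<le> b"
    and F5: "\<And>a b a' b'. P a b \<in> B \<Longrightarrow> 0 \<le> a' \<Longrightarrow> a' \<le> a \<Longrightarrow> 0 \<le> b' \<Longrightarrow> b' \<le> b \<Longrightarrow> P a' b' \<in> B"
    and F6: "\<And>v. v \<in> B \<Longrightarrow> \<exists>a b. v = P a b"
    and F7: "P 0 0 \<in> B"
  shows "\<exists>e f. mpair cs e f \<and> (\<forall>E\<in>{e,f}. (P 0 0 \<in> E \<or> P 2 0 \<in> E) \<and>
            (\<forall>v\<in>E. \<exists>a b. v = P a b \<and> 0 \<le> a \<and> a \<le> 4 \<and> 0 \<le> b \<and> b \<le> 2))"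
proof -
  have ne: "cs \<noteq> []" using cyc by (auto simp: hcyc_def)
  have setB: "set cs = B" using cyc by (auto simp: hcyc_def)
  have nbr: "\<exists>a b. u = P a b \<and> 0 \<le> a \<and> 0 \<le> b \<and> knight_adj v u" if "{v,u} \<in> cedges cs" for u v
  proof -
    have "u \<in> B" using cedges_subset[OF ne that] setB by auto
    then obtain a b where "u = P a b" using F6 by blast
    moreover have "knight_adj v u" using cedges_adj[OF cyc that] knight_adj_sym by blast
    ultimately show ?thesis using F4 \<open>u \<in> B\<close> by blast
  qed
  have n0: "u = P 1 2 \<or> u = P 2 1" if hh: "{P 0 0, u} \<in> cedges cs" for u
  proof -
    obtain a b where u: "u = P a b" "0 \<le> a" "0 \<le> b" "knight_adj (P 0 0) u" using nbr[OF hh] by blast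
    then have "(\<bar>a\<bar> = 1 \<and> \<bar>b\<bar> = 2) \<or> (\<bar>a\<bar> = 2 \<and> \<bar>b\<bar> = 1)" using F2 by simp
    then have "(a = 1 \<and> b = 2) \<or> (a = 2 \<and> b = 1)" using u by auto
    then show ?thesis using u by auto
  qed
  obtain u w where uw: "u \<noteq> w" "{P 0 0, u} \<in> cedges cs" "{P 0 0, w} \<in> cedges cs"
    using hcyc_degree[OF cyc F7] by blast
  have A: "{P 0 0, P 2 1} \<in> cedges cs" and D: "{P 0 0, P 1 2} \<in> cedges cs"
    using n0[OF uw(2)] n0[OF uw(3)] uw(1) uw by auto
  have "P 2 1 \<in> B" using cedges_subset[OF ne A] setB by auto
  then have P20: "P 2 0 \<in> B" using F5[where a=2 and b=1 and a'=2 and b'=0] by auto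
  have n2: "u = P 1 2 \<or> u = P 3 2 \<or> u = P 0 1 \<or> u = P 4 1" if hh: "{P 2 0, u} \<in> cedges cs" for u
  proof -
    obtain a b where u: "u = P a b" "0 \<le> a" "0 \<le> b" "knight_adj (P 2 0) u" using nbr[OF hh] by blast
    then have "(\<bar>a - 2\<bar> = 1 \<and> \<bar>b\<bar> = 2) \<or> (\<bar>a - 2\<bar> = 2 \<and> \<bar>b\<bar> = 1)" using F2 by simp
    then have "(a = 1 \<and> b = 2) \<or> (a = 3 \<and> b = 2) \<or> (a = 0 \<and> b = 1) \<or> (a = 4 \<and> b = 1)" using u by auto
    then show ?thesis using u by auto
  qed
  obtain u' w' where uw': "u' \<noteq> w'" "{P 2 0, u'} \<in> cedges cs" "{P 2 0, w'} \<in> cedges cs"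
    using hcyc_degree[OF cyc P20] by blast
  obtain t where t: "{P 2 0, t} \<in> cedges cs" "t = P 3 2 \<or> t = P 0 1 \<or> t = P 4 1"
    using n2[OF uw'(2)] n2[OF uw'(3)] uw' by metis
  have R: "\<exists>a' b'. P a b = P a' b' \<and> 0 \<le> a' \<and> a' \<le> 4 \<and> 0 \<le> b' \<and> b' \<le> 2"
    if "0 \<le> a" "a \<le> 4" "0 \<le> b" "b \<le> 2" for a b using that by blast
  have s00: "shift2 (P 0 0) (P 2 0)" using F3[where a=0 and b=0 and c=2] by simp
  have n00: "P 0 0 \<noteq> P 2 0" "P 0 0 \<noteq> P 3 2" "P 0 0 \<noteq> P 0 1" "P 0 0 \<noteq> P 4 1"
    by (auto dest!: F1)
  from t(2) show ?thesis
  proof (elim disjE)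
    assume tt: "t = P 3 2"
    have "shift2 (P 1 2) (P 3 2)" using F3[where a=1 and b=2 and c=3] by simp
    then have "mpair cs {P 0 0, P 1 2} {P 2 0, P 3 2}"
      using t(1) D tt s00 n00 unfolding mpair_def by blast
    moreover have "\<forall>E\<in>{{P 0 0, P 1 2}, {P 2 0, P 3 2}}. (P 0 0 \<in> E \<or> P 2 0 \<in> E) \<and>
            (\<forall>v\<in>E. \<exists>a b. v = P a b \<and> 0 \<le> a \<and> a \<le> 4 \<and> 0 \<le> b \<and> b \<le> 2)"
      using R[of 0 0] R[of 1 2] R[of 2 0] R[of 3 2] by auto
    ultimately show ?thesis by blast
  next
    assume tt: "t = P 0 1"
    have "shift2 (P 2 1) (P 0 1)" using F3[where a=2 and b=1 and c=0] by simp
    then have "mpair cs {P 0 0, P 2 1} {P 2 0, P 0 1}"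
      using t(1) A tt s00 n00 unfolding mpair_def by blast
    moreover have "\<forall>E\<in>{{P 0 0, P 2 1}, {P 2 0, P 0 1}}. (P 0 0 \<in> E \<or> P 2 0 \<in> E) \<and>
            (\<forall>v\<in>E. \<exists>a b. v = P a b \<and> 0 \<le> a \<and> a \<le> 4 \<and> 0 \<le> b \<and> b \<le> 2)"
      using R[of 0 0] R[of 2 1] R[of 2 0] R[of 0 1] by auto
    ultimately show ?thesis by blast
  next
    assume tt: "t = P 4 1"
    have "shift2 (P 2 1) (P 4 1)" using F3[where a=2 and b=1 and c=4] by simp
    then have "mpair cs {P 0 0, P 2 1} {P 2 0, P 4 1}"
      using t(1) A tt s00 n00 unfolding mpair_def by blast
    moreover have "\<forall>E\<in>{{P 0 0, P 2 1}, {P 2 0, P 4 1}}. (P 0 0 \<in> E \<or> P 2 0 \<in> E) \<and>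
            (\<forall>v\<in>E. \<exists>a b. v = P a b \<and> 0 \<le> a \<and> a \<le> 4 \<and> 0 \<le> b \<and> b \<le> 2)"
      using R[of 0 0] R[of 2 1] R[of 2 0] R[of 4 1] by auto
    ultimately show ?thesis by blast
  qed
qed



lemma ckt_iff: "closed_knight_tour ns \<longleftrightarrow> (\<exists>cs. hcyc knight_adj (board ns) cs)"
proof -
  have eq: "(\<forall>i<length cs. R (cs ! i) (cs ! ((i + 1) mod length cs))) \<longleftrightarrow>
            successively R cs \<and> R (last cs) (hd cs)" if "3 \<le> length cs" for cs :: "'a list" and R
  proof
    assume h: "\<forall>i<length cs. R (cs ! i) (cs ! ((i + 1) mod length cs))"
    have "successively R cs" unfolding successively_conv_nth
    proof (intro allI impI)
      fix i assume "Suc i < length cs"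
      then show "R (cs ! i) (cs ! Suc i)" using h[rule_format, of i] by simp
    qed
    moreover have "R (last cs) (hd cs)"
    proof -
      have L: "Suc (length cs - Suc 0) = length cs" "length cs - Suc 0 < length cs" using that by auto
      have "cs \<noteq> []" using that by auto
      then show ?thesis using h[rule_format, of "length cs - 1"] that L by (simp add: last_conv_nth hd_conv_nth)
    qed
    ultimately show "successively R cs \<and> R (last cs) (hd cs)" by blast
  next
    assume h: "successively R cs \<and> R (last cs) (hd cs)"
    show "\<forall>i<length cs. R (cs ! i) (cs ! ((i + 1) mod length cs))"
    proof (intro allI impI)
      fix i assume i: "i < length cs"
      show "R (cs ! i) (cs ! ((i + 1) mod length cs))"
      proof (cases "Suc i < length cs")
        case True then show ?thesis using h successively_nth by fastforce
      next
        case False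
        then have "Suc i = length cs" using i by auto
        then have "i = length cs - 1" "(i + 1) mod length cs = 0" by auto
        moreover have "cs \<noteq> []" using that by auto
        ultimately show ?thesis using h by (simp add: last_conv_nth hd_conv_nth)
      qed
    qed
  qed
  show ?thesis unfolding closed_knight_tour_def hcyc_def using eq by blast
qed

lemma hcyc_nbr:
  assumes "hcyc knight_adj B cs" "v \<in> B"
  shows "\<exists>u\<in>B. knight_adj v u"
proof -
  obtain u w where "{v,u} \<in> cedges cs" using hcyc_degree[OF assms] by blast
  moreover have "cs \<noteq> []" using assms by (auto simp: hcyc_def)
  ultimately have "u \<in> B" "knight_adj v u \<or> knight_adj u v"
    using cedges_subset cedges_adj[OF assms(1)] assms(1) by (auto simp: hcyc_def)
  then show ?thesis using knight_adj_sym by blast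
qed

lemma fr_abs: "\<bar>sx\<bar> = 1 \<Longrightarrow> \<bar>(x0 + sx * c) - (x0 + sx * a)\<bar> = \<bar>c - (a::int)\<bar>"
proof -
  assume "\<bar>sx\<bar> = 1"
  then have "\<bar>sx * (c - a)\<bar> = \<bar>c - a\<bar>" by (simp add: abs_mult)
  then show ?thesis by (simp add: right_diff_distrib)
qed

lemma fr_inj: "\<bar>sx::int\<bar> = 1 \<Longrightarrow> \<bar>sy\<bar> = 1 \<Longrightarrow> x0 + sx * a = x0 + sx * c \<Longrightarrow> y0 + sy * b = y0 + sy * (d::int) \<Longrightarrow> a = c \<and> b = d"
proof -
  assume h: "\<bar>sx\<bar> = 1" "\<bar>sy\<bar> = 1" "x0 + sx * a = x0 + sx * c" "y0 + sy * b = y0 + sy * (d::int)"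
  then have "sx \<noteq> 0" "sy \<noteq> 0" by auto
  then show ?thesis using h(3,4) by simp
qed

lemma fr_surj: "\<bar>sx\<bar> = 1 \<Longrightarrow> i = x0 + sx * (sx * (i - (x0::int)))"
proof -
  assume "\<bar>sx\<bar> = 1"
  then have "sx * sx = 1" by (cases "sx \<ge> 0") auto
  then show ?thesis by (simp add: mult.assoc[symmetric])
qed

lemma corner_fr:
  fixes P :: "int \<Rightarrow> int \<Rightarrow> int list"
  assumes cyc: "hcyc knight_adj B cs" and shp: "\<And>v. v \<in> B \<Longrightarrow> \<exists>i j. v = [i,j]"
    and sx: "\<bar>sx\<bar> = 1" and sy: "\<bar>sy\<bar> = 1"
    and sw: "P = (\<lambda>a b. [px + sx * a, py + sy * b]) \<or> P = (\<lambda>a b. [py + sy * b, px + sx * a])"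
    and F4: "\<And>a b. P a b \<in> B \<Longrightarrow> 0 \<le> a \<and> 0 \<le> b"
    and F5: "\<And>a b a' b'. P a b \<in> B \<Longrightarrow> 0 \<le> a' \<Longrightarrow> a' \<le> a \<Longrightarrow> 0 \<le> b' \<Longrightarrow> b' \<le> b \<Longrightarrow> P a' b' \<in> B"
    and F7: "P 0 0 \<in> B"
  shows "\<exists>e f. mpair cs e f \<and> (\<forall>E\<in>{e,f}. (P 0 0 \<in> E \<or> P 2 0 \<in> E) \<and>
            (\<forall>v\<in>E. \<exists>a b. v = P a b \<and> 0 \<le> a \<and> a \<le> 4 \<and> 0 \<le> b \<and> b \<le> 2))"
proof (rule corner[where P=P and B=B and cs=cs, OF cyc _ _ _ F4 F5 _ F7])
  show "P a b = P c d \<Longrightarrow> a = c \<and> b = d" for a b c d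
  proof -
    assume h: "P a b = P c d"
    from sw show ?thesis
    proof
      assume P: "P = (\<lambda>a b. [px + sx * a, py + sy * b])"
      from h have "px + sx * a = px + sx * c" "py + sy * b = py + sy * d" unfolding P by simp_all
      then show ?thesis using fr_inj[OF sx sy] by blast
    next
      assume P: "P = (\<lambda>a b. [py + sy * b, px + sx * a])"
      from h have "px + sx * a = px + sx * c" "py + sy * b = py + sy * d" unfolding P by simp_all
      then show ?thesis using fr_inj[OF sx sy] by blast
    qed
  qed
  show "knight_adj (P a b) (P c d) \<longleftrightarrow> (\<bar>c-a\<bar> = 1 \<and> \<bar>d-b\<bar> = 2) \<or> (\<bar>c-a\<bar> = 2 \<and> \<bar>d-b\<bar> = 1)" for a b c d
  proof -
    have e1: "\<bar>(px + sx * c) - (px + sx * a)\<bar> = \<bar>c - a\<bar>" by (rule fr_abs[OF sx])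
    have e2: "\<bar>(py + sy * d) - (py + sy * b)\<bar> = \<bar>d - b\<bar>" by (rule fr_abs[OF sy])
    from sw show ?thesis
    proof
      assume P: "P = (\<lambda>a b. [px + sx * a, py + sy * b])"
      show ?thesis unfolding P by (simp only: knight_adj_2d e1 e2)
    next
      assume P: "P = (\<lambda>a b. [py + sy * b, px + sx * a])"
      have "knight_adj (P a b) (P c d) \<longleftrightarrow> (\<bar>d-b\<bar> = 1 \<and> \<bar>c-a\<bar> = 2) \<or> (\<bar>d-b\<bar> = 2 \<and> \<bar>c-a\<bar> = 1)"
        unfolding P by (simp only: knight_adj_2d e1 e2)
      then show ?thesis by blast
    qed
  qed
  show "\<bar>c-a\<bar> = 2 \<Longrightarrow> shift2 (P a b) (P c b)" for a b c
  proof -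
    assume h: "\<bar>c-a\<bar> = 2"
    have e1: "\<bar>(px + sx * c) - (px + sx * a)\<bar> = 2" using fr_abs[OF sx, of px c a] h by simp
    from sw show ?thesis
    proof
      assume P: "P = (\<lambda>a b. [px + sx * a, py + sy * b])"
      show ?thesis unfolding P using shift2_2d[OF e1] by simp
    next
      assume P: "P = (\<lambda>a b. [py + sy * b, px + sx * a])"
      show ?thesis unfolding P using shift2_2d'[OF e1] by simp
    qed
  qed
  show "v \<in> B \<Longrightarrow> \<exists>a b. v = P a b" for v
  proof -
    assume "v \<in> B"
    then obtain i j where v: "v = [i,j]" using shp by blast
    from sw show ?thesis
    proof
      assume P: "P = (\<lambda>a b. [px + sx * a, py + sy * b])"
      have "v = P (sx * (i - px)) (sy * (j - py))" unfolding P v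
        using fr_surj[OF sx, of i px] fr_surj[OF sy, of j py] by simp
      then show ?thesis by blast
    next
      assume P: "P = (\<lambda>a b. [py + sy * b, px + sx * a])"
      have "v = P (sx * (j - px)) (sy * (i - py))" unfolding P v
        using fr_surj[OF sx, of j px] fr_surj[OF sy, of i py] by simp
      then show ?thesis by blast
    qed
  qed
qed

definition Inv :: "nat list \<Rightarrow> bool" where
  "Inv ns \<longleftrightarrow> (\<exists>cs e f g h. hcyc knight_adj (board ns) cs \<and> mpair cs e f \<and> mpair cs g h \<and>
      e \<notin> {g, h} \<and> f \<notin> {g, h})"

lemma Inv_ckt: "Inv ns \<Longrightarrow> closed_knight_tour ns"
  unfolding Inv_def ckt_iff by blast

lemma base:
  assumes "0 < n" "0 < m" "closed_knight_tour [n, m]"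
  shows "Inv [n, m]"
proof -
  obtain cs where cyc: "hcyc knight_adj (board [n,m]) cs" using assms(3) ckt_iff by blast
  define B where "B = board [n,m]"
  have cycB: "hcyc knight_adj B cs" using cyc B_def by simp
  have bd: "[i,j] \<in> B \<longleftrightarrow> 1 \<le> i \<and> i \<le> int n \<and> 1 \<le> j \<and> j \<le> int m" for i j
    unfolding B_def board_2d by auto
  have bdE: "\<exists>i j. v = [i,j] \<and> 1 \<le> i \<and> i \<le> int n \<and> 1 \<le> j \<and> j \<le> int m" if "v \<in> B" for v
    using that unfolding B_def board_2d by auto
  have P11: "[1,1] \<in> B" using assms(1,2) bd by simp
  obtain u where u: "u \<in> B" "knight_adj [1,1] u" using hcyc_nbr[OF cycB P11] by blast
  then obtain i j where ij: "u = [i,j]" "1 \<le> i" "i \<le> int n" "1 \<le> j" "j \<le> int m" using bdE by blast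
  with u(2) have "2 \<le> int n" "2 \<le> int m" by (auto simp: knight_adj_2d)
  then have P22: "[2,2] \<in> B" using bd by simp
  have big: "4 \<le> int n \<or> 4 \<le> int m"
  proof (rule ccontr)
    assume "\<not> ?thesis"
    then have nm: "int n \<le> 3" "int m \<le> 3" by auto
    obtain u where u: "u \<in> B" "knight_adj [2,2] u" using hcyc_nbr[OF cycB P22] by blast
    then obtain i j where ij: "u = [i,j]" "1 \<le> i" "i \<le> int n" "1 \<le> j" "j \<le> int m" using bdE by blast
    with u(2) nm show False by (auto simp: knight_adj_2d)
  qed
  have Bshp: "\<And>v. v \<in> B \<Longrightarrow> \<exists>i j. v = [i,j]" using bdE by blast
  have inv_of: "Inv [n,m]" if "mpair cs e1 f1" "mpair cs e2 f2"
     "\<forall>E\<in>{e1,f1}. \<exists>v\<in>E. Q v" "\<forall>E\<in>{e2,f2}. \<forall>v\<in>E. \<not> Q v" for e1 f1 e2 f2 Q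
  proof -
    have "e1 \<notin> {e2,f2}" "f1 \<notin> {e2,f2}" using that(3,4) by blast+
    then show ?thesis unfolding Inv_def using cyc that(1,2) by blast
  qed
  show ?thesis
  proof (cases "4 \<le> int m")
    case True
    obtain e1 f1 where c1: "mpair cs e1 f1" "\<forall>E\<in>{e1,f1}. ([1 + 1 * 0, 1 + 1 * 0] \<in> E \<or> [1 + 1 * 2, 1 + 1 * 0] \<in> E) \<and>
            (\<forall>v\<in>E. \<exists>a b. v = [1 + 1 * a, 1 + 1 * b] \<and> 0 \<le> a \<and> a \<le> 4 \<and> 0 \<le> b \<and> b \<le> 2)"
      using corner_fr[where sx=1 and sy=1 and px=1 and py=1 and P="\<lambda>a b. [1 + 1 * a, 1 + 1 * b]", OF cycB Bshp]
      using assms(1,2) by (auto simp: bd)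
    obtain e2 f2 where c2: "mpair cs e2 f2" "\<forall>E\<in>{e2,f2}. ([1 + 1 * 0, int m + (-1) * 0] \<in> E \<or> [1 + 1 * 2, int m + (-1) * 0] \<in> E) \<and>
            (\<forall>v\<in>E. \<exists>a b. v = [1 + 1 * a, int m + (-1) * b] \<and> 0 \<le> a \<and> a \<le> 4 \<and> 0 \<le> b \<and> b \<le> 2)"
      using corner_fr[where sx=1 and sy="-1" and px=1 and py="int m" and P="\<lambda>a b. [1 + 1 * a, int m + (-1) * b]", OF cycB Bshp]
      using assms(1,2) by (auto simp: bd)
    show ?thesis
    proof (rule inv_of[OF c1(1) c2(1), where Q="\<lambda>v. v ! 1 = 1"])
      show "\<forall>E\<in>{e1,f1}. \<exists>v\<in>E. v ! 1 = 1"
      proof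
        fix E assume E: "E \<in> {e1,f1}"
        have "[1,1] \<in> E \<or> [3,1] \<in> E" using conjunct1[OF bspec[OF c1(2) E]] by simp
        then show "\<exists>v\<in>E. v ! 1 = 1" by (elim disjE) force+
      qed
      show "\<forall>E\<in>{e2,f2}. \<forall>v\<in>E. \<not> v ! 1 = 1"
      proof (intro ballI)
        fix E v assume E: "E \<in> {e2,f2}" and v: "v \<in> E"
        obtain a b where "v = [1 + 1 * a, int m + (-1) * b]" "b \<le> 2" using bspec[OF conjunct2[OF bspec[OF c2(2) E]] v] by blast
        then show "\<not> v ! 1 = 1" using True by simp
      qed
    qed
  next
    case False
    then have True: "4 \<le> int n" using big by auto
    obtain e1 f1 where c1: "mpair cs e1 f1" "\<forall>E\<in>{e1,f1}. ([1 + 1 * 0, 1 + 1 * 0] \<in> E \<or> [1 + 1 * 0, 1 + 1 * 2] \<in> E) \<and>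
            (\<forall>v\<in>E. \<exists>a b. v = [1 + 1 * b, 1 + 1 * a] \<and> 0 \<le> a \<and> a \<le> 4 \<and> 0 \<le> b \<and> b \<le> 2)"
      using corner_fr[where sx=1 and sy=1 and px=1 and py=1 and P="\<lambda>a b. [1 + 1 * b, 1 + 1 * a]", OF cycB Bshp]
      using assms(1,2) by (auto simp: bd)
    obtain e2 f2 where c2: "mpair cs e2 f2" "\<forall>E\<in>{e2,f2}. ([int n + (-1) * 0, 1 + 1 * 0] \<in> E \<or> [int n + (-1) * 0, 1 + 1 * 2] \<in> E) \<and>
            (\<forall>v\<in>E. \<exists>a b. v = [int n + (-1) * b, 1 + 1 * a] \<and> 0 \<le> a \<and> a \<le> 4 \<and> 0 \<le> b \<and> b \<le> 2)"
      using corner_fr[where sx=1 and sy="-1" and px=1 and py="int n" and P="\<lambda>a b. [int n + (-1) * b, 1 + 1 * a]", OF cycB Bshp]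
      using assms(1,2) by (auto simp: bd)
    show ?thesis
    proof (rule inv_of[OF c1(1) c2(1), where Q="\<lambda>v. v ! 0 = 1"])
      show "\<forall>E\<in>{e1,f1}. \<exists>v\<in>E. v ! 0 = 1"
      proof
        fix E assume E: "E \<in> {e1,f1}"
        have "[1,1] \<in> E \<or> [1,3] \<in> E" using conjunct1[OF bspec[OF c1(2) E]] by simp
        then show "\<exists>v\<in>E. v ! 0 = 1" by (elim disjE) force+
      qed
      show "\<forall>E\<in>{e2,f2}. \<forall>v\<in>E. \<not> v ! 0 = 1"
      proof (intro ballI)
        fix E v assume E: "E \<in> {e2,f2}" and v: "v \<in> E"
        obtain a b where "v = [int n + (-1) * b, 1 + 1 * a]" "b \<le> 2" using bspec[OF conjunct2[OF bspec[OF c2(2) E]] v] by blast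
        then show "\<not> v ! 0 = 1" using True by simp
      qed
    qed
  qed
qed



definition liftE :: "int \<Rightarrow> int list set \<Rightarrow> int list set" where
  "liftE z E = (\<lambda>u. u @ [z]) ` E"

lemma inj_snoc: "inj (\<lambda>u::int list. u @ [z])"
  by (auto intro: injI)

lemma liftE_pair: "liftE z {x, y} = {x @ [z], y @ [z]}"
  by (simp add: liftE_def)

lemma liftE_eq: "E \<noteq> {} \<Longrightarrow> liftE z E = liftE z' E' \<Longrightarrow> z = z' \<and> E = E'"
proof -
  assume ne: "E \<noteq> {}" and eq: "liftE z E = liftE z' E'"
  then obtain x where "x \<in> E" by blast
  then have "x @ [z] \<in> liftE z' E'" using eq by (auto simp: liftE_def)
  then have zz: "z = z'" by (auto simp: liftE_def)
  then show ?thesis using eq inj_snoc[of z] by (auto simp: liftE_def inj_image_eq_iff)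
qed

lemma cedges_map: "xs \<noteq> [] \<Longrightarrow> cedges (map f xs) = (\<lambda>S. f ` S) ` cedges xs"
  by (simp add: cedges_def sedges_map last_map hd_map)

lemma hcyc_lift: "hcyc knight_adj B cs \<Longrightarrow> hcyc knight_adj ((\<lambda>u. u @ [z]) ` B) (map (\<lambda>u. u @ [z]) cs)"
proof -
  assume h: "hcyc knight_adj B cs"
  then have ne: "cs \<noteq> []" by (auto simp: hcyc_def)
  have "successively knight_adj (map (\<lambda>u. u @ [z]) cs)"
    using h unfolding hcyc_def successively_map by (auto elim: successively_mono simp: knight_adj_lift)
  moreover have "knight_adj (last (map (\<lambda>u. u @ [z]) cs)) (hd (map (\<lambda>u. u @ [z]) cs))"
    using h ne by (simp add: hcyc_def last_map hd_map knight_adj_lift)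
  ultimately show ?thesis using h unfolding hcyc_def by (auto simp: distinct_map inj_on_def)
qed

lemma cedges_lift: "hcyc R B cs \<Longrightarrow> cedges (map (\<lambda>u. u @ [z]) cs) = liftE z ` cedges cs"
  by (subst cedges_map) (auto simp: hcyc_def liftE_def)

lemma mpair_lift: "mpair cs e f \<Longrightarrow> liftE z e \<in> cedges D \<Longrightarrow> liftE z f \<in> cedges D \<Longrightarrow> mpair D (liftE z e) (liftE z f)"
  unfolding mpair_def
  apply (elim conjE exE)
  apply (intro conjI)
    apply assumption+
   apply (metis liftE_eq insert_not_empty)
  apply (metis liftE_pair shift2_lift)
  done

lemma board_snoc: "board (ns @ [p]) = {u @ [z] | u z. u \<in> board ns \<and> 1 \<le> z \<and> z \<le> int p}"
proof (rule set_eqI, rule iffI)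
  fix xs assume h: "xs \<in> board (ns @ [p])"
  then have len: "length xs = Suc (length ns)" by (simp add: board_def)
  then have xs: "xs = butlast xs @ [last xs]" by (metis append_butlast_last_id list.size(3) nat.distinct(1))
  have bl: "butlast xs \<in> board ns"
    unfolding board_def
  proof (intro CollectI conjI allI impI)
    show "length (butlast xs) = length ns" using len by simp
    fix i assume i: "i < length ns"
    then have "1 \<le> xs ! i \<and> xs ! i \<le> int ((ns @ [p]) ! i)" using h by (simp add: board_def)
    then show "1 \<le> butlast xs ! i" "butlast xs ! i \<le> int (ns ! i)" using i len
      by (simp_all add: nth_butlast nth_append)
  qed
  have "1 \<le> xs ! length ns \<and> xs ! length ns \<le> int ((ns @ [p]) ! length ns)" using h unfolding board_def by auto
  moreover have "last xs = xs ! length ns"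
  proof -
    have "xs \<noteq> []" using len by auto
    then show ?thesis using len by (simp add: last_conv_nth)
  qed
  moreover have "(ns @ [p]) ! length ns = p" by simp
  ultimately have "1 \<le> last xs" "last xs \<le> int p" by simp_all
  then show "xs \<in> {u @ [z] | u z. u \<in> board ns \<and> 1 \<le> z \<and> z \<le> int p}" using xs bl by blast
next
  fix xs assume "xs \<in> {u @ [z] | u z. u \<in> board ns \<and> 1 \<le> z \<and> z \<le> int p}"
  then obtain u z where u: "xs = u @ [z]" "u \<in> board ns" "1 \<le> z" "z \<le> int p" by blast
  show "xs \<in> board (ns @ [p])"
    unfolding board_def
  proof (intro CollectI conjI allI impI)
    show "length xs = length (ns @ [p])" using u by (simp add: board_def)
    fix i assume i: "i < length (ns @ [p])"
    have c: "1 \<le> xs ! i \<and> xs ! i \<le> int ((ns @ [p]) ! i)"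
    proof (cases "i < length ns")
      case True then show ?thesis using u by (simp add: board_def nth_append)
    next
      case False then have "i = length ns" using i by simp
      then show ?thesis using u by (simp add: board_def nth_append)
    qed
    then show "1 \<le> xs ! i" by simp
    from c show "xs ! i \<le> int ((ns @ [p]) ! i)" by simp
  qed
qed



lemma step:
  assumes inv: "Inv ns" and p: "0 < p"
  shows "Inv (ns @ [p])"
proof -
  obtain cs e f g h where cyc: "hcyc knight_adj (board ns) cs" and ef: "mpair cs e f"
    and gh: "mpair cs g h" and dj: "e \<notin> {g,h}" "f \<notin> {g,h}"
    using inv unfolding Inv_def by blast
  define B where "B = board ns"
  define U where "U k = {u @ [z] | u z. u \<in> B \<and> 1 \<le> z \<and> z \<le> int k}" for k :: nat
  define L where "L z = map (\<lambda>u. u @ [z]) cs" for z :: int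
  have cycB: "hcyc knight_adj B cs" using cyc B_def by simp
  have Lcyc: "hcyc knight_adj ((\<lambda>u. u @ [z]) ` B) (L z)" for z
    unfolding L_def by (rule hcyc_lift[OF cycB])
  have Lced: "cedges (L z) = liftE z ` cedges cs" for z
    unfolding L_def by (rule cedges_lift[OF cycB])
  obtain x y x' y' where exy: "e = {x,y}" "f = {x',y'}" "shift2 x x'" "shift2 y y'"
    and emem: "e \<in> cedges cs" "f \<in> cedges cs" "e \<noteq> f"
    using ef unfolding mpair_def by blast
  have gmem: "g \<in> cedges cs" "h \<in> cedges cs" "g \<noteq> h" "g \<noteq> {}" "h \<noteq> {}"
    using gh unfolding mpair_def by auto
  have ene: "e \<noteq> {}" using exy by simp
  have U1: "U 1 = (\<lambda>u. u @ [1]) ` B" unfolding U_def by auto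
  have USuc: "U (Suc k) = U k \<union> (\<lambda>u. u @ [int k + 1]) ` B" for k
    unfolding U_def by (auto; force)
  have Udisj: "U k \<inter> (\<lambda>u. u @ [int k + 1]) ` B = {}" for k
    unfolding U_def by auto
  have claim: "\<exists>D. hcyc knight_adj (U k) D \<and> liftE (int k) e \<in> cedges D \<and>
      liftE 1 g \<in> cedges D \<and> liftE 1 h \<in> cedges D \<and>
      (2 \<le> k \<longrightarrow> liftE 2 g \<in> cedges D \<and> liftE 2 h \<in> cedges D)" if "1 \<le> k" for k
    using that
  proof (induction k rule: nat_induct_at_least)
    case base
    show ?case
      by (rule exI[of _ "L 1"]) (use Lcyc[of 1] U1 emem gmem in \<open>auto simp: Lced\<close>)
  next
    case (Suc k)
    then obtain D where D: "hcyc knight_adj (U k) D" "liftE (int k) e \<in> cedges D"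
      "liftE 1 g \<in> cedges D" "liftE 1 h \<in> cedges D"
      "2 \<le> k \<longrightarrow> liftE 2 g \<in> cedges D \<and> liftE 2 h \<in> cedges D" by blast
    have m1: "{x @ [int k], y @ [int k]} \<in> cedges D" using D(2) exy by (simp add: liftE_pair)
    have m2: "{x' @ [int k + 1], y' @ [int k + 1]} \<in> cedges (L (int k + 1))"
      using emem exy Lced by (metis image_eqI liftE_pair)
    have r1: "knight_adj (x @ [int k]) (x' @ [int k + 1])" using shift2_cross[OF exy(3)] by simp
    have r2: "knight_adj (y @ [int k]) (y' @ [int k + 1])" using shift2_cross[OF exy(4)] by simp
    obtain zs where zs: "hcyc knight_adj (U k \<union> (\<lambda>u. u @ [int k + 1]) ` B) zs"
      "cedges D - {{x @ [int k], y @ [int k]}} \<subseteq> cedges zs"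
      "cedges (L (int k + 1)) - {{x' @ [int k + 1], y' @ [int k + 1]}} \<subseteq> cedges zs"
      using hcyc_merge[OF symp_knight D(1) Lcyc Udisj m1 m2 r1 r2] by blast
    have old: "E \<in> cedges zs" if "E \<in> cedges D" "E \<noteq> liftE (int k) e" for E
      using zs(2) that exy by (auto simp: liftE_pair)
    have new: "liftE (int k + 1) E \<in> cedges zs" if "E \<in> cedges cs" "E \<noteq> f" for E
    proof -
      have "liftE (int k + 1) E \<in> cedges (L (int k + 1))" using that Lced by simp
      moreover have "liftE (int k + 1) E \<noteq> {x' @ [int k + 1], y' @ [int k + 1]}"
        using liftE_eq[of f "int k + 1" "int k + 1" E] exy that by (auto simp: liftE_pair)
      ultimately show ?thesis using zs(3) by blast
    qed
    have ne_e: "liftE z E \<noteq> liftE (int k) e" if "E \<noteq> e" "E \<noteq> {}" for z E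
      using liftE_eq[OF that(2), of z "int k" e] that by auto
    have c1: "liftE (int (Suc k)) e \<in> cedges zs" using new[OF emem(1) emem(3)] by (simp add: add.commute)
    have ge: "g \<noteq> e" "h \<noteq> e" "g \<noteq> f" "h \<noteq> f" using dj by auto
    have c2: "liftE 1 g \<in> cedges zs" "liftE 1 h \<in> cedges zs"
      using old[OF D(3) ne_e[OF ge(1) gmem(4)]] old[OF D(4) ne_e[OF ge(2) gmem(5)]] by auto
    have c3: "liftE 2 g \<in> cedges zs \<and> liftE 2 h \<in> cedges zs"
    proof (cases "2 \<le> k")
      case True
      then have "liftE 2 g \<in> cedges D" "liftE 2 h \<in> cedges D" using D(5) by auto
      then show ?thesis using old ne_e[OF ge(1) gmem(4)] ne_e[OF ge(2) gmem(5)] by blast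
    next
      case False
      then have "k = 1" using Suc by simp
      then show ?thesis using new[OF gmem(1) ge(3)] new[OF gmem(2) ge(4)] by simp
    qed
    show ?case using zs(1) c1 c2 c3 USuc[of k] by auto
  qed
  have bdU: "board (ns @ [p]) = U p" by (simp add: board_snoc U_def B_def)
  have ge: "e \<noteq> g" "e \<noteq> h" "f \<noteq> g" "f \<noteq> h" using dj by auto
  have fne: "f \<noteq> {}" using exy by simp
  have lne: "liftE z E \<noteq> liftE z' E'" if "E \<noteq> E'" "E \<noteq> {}" for z z' E E'
  proof
    assume "liftE z E = liftE z' E'"
    from liftE_eq[OF that(2) this] that(1) show False by simp
  qed
  have lne2: "liftE 1 E \<noteq> liftE 2 E'" if "E \<noteq> {}" for E E'
  proof
    assume "liftE 1 E = liftE 2 E'"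
    from liftE_eq[OF that this] show False by simp
  qed
  have inL: "liftE z E \<in> cedges (L z)" if "E \<in> cedges cs" for z E
    using that Lced by simp
  show ?thesis
  proof (cases "p = 1")
    case True
    have bd: "board (ns @ [p]) = (\<lambda>u. u @ [1]) ` B" using bdU True U1 by simp
    have "mpair (L 1) (liftE 1 e) (liftE 1 f)"
      by (rule mpair_lift[OF ef inL[OF emem(1)] inL[OF emem(2)]])
    moreover have "mpair (L 1) (liftE 1 g) (liftE 1 h)"
      by (rule mpair_lift[OF gh inL[OF gmem(1)] inL[OF gmem(2)]])
    moreover have "liftE 1 e \<notin> {liftE 1 g, liftE 1 h}" "liftE 1 f \<notin> {liftE 1 g, liftE 1 h}"
      using lne[OF ge(1) ene, of 1 1] lne[OF ge(2) ene, of 1 1] lne[OF ge(3) fne, of 1 1] lne[OF ge(4) fne, of 1 1]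
      by simp_all
    moreover have "hcyc knight_adj (board (ns @ [p])) (L 1)" using Lcyc[of 1] bd by simp
    ultimately show ?thesis unfolding Inv_def
      apply (rule_tac x="L 1" in exI, rule_tac x="liftE 1 e" in exI, rule_tac x="liftE 1 f" in exI,
             rule_tac x="liftE 1 g" in exI, rule_tac x="liftE 1 h" in exI)
      by (intro conjI)
  next
    case False
    then have "1 \<le> p" "2 \<le> p" using p by auto
    then obtain D where D: "hcyc knight_adj (U p) D"
      "liftE 1 g \<in> cedges D" "liftE 1 h \<in> cedges D" "liftE 2 g \<in> cedges D" "liftE 2 h \<in> cedges D"
      using claim[of p] by blast
    have "mpair D (liftE 1 g) (liftE 1 h)" by (rule mpair_lift[OF gh D(2) D(3)])
    moreover have "mpair D (liftE 2 g) (liftE 2 h)" by (rule mpair_lift[OF gh D(4) D(5)])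
    moreover have "liftE 1 g \<notin> {liftE 2 g, liftE 2 h}" "liftE 1 h \<notin> {liftE 2 g, liftE 2 h}"
      using lne2[OF gmem(4), of g] lne2[OF gmem(4), of h] lne2[OF gmem(5), of g] lne2[OF gmem(5), of h]
      by simp_all
    moreover have "hcyc knight_adj (board (ns @ [p])) D" using D(1) bdU by simp
    ultimately show ?thesis unfolding Inv_def
      apply (rule_tac x="D" in exI, rule_tac x="liftE 1 g" in exI, rule_tac x="liftE 1 h" in exI,
             rule_tac x="liftE 2 g" in exI, rule_tac x="liftE 2 h" in exI)
      by (intro conjI)
  qed
qed


theorem corollary4p3:
  fixes n m :: nat and ps :: "nat list"
  assumes "0 < n" and "0 < m" and "\<forall>p\<in>set ps. 0 < p"
    and "closed_knight_tour [n, m]"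
  shows "closed_knight_tour (n # m # ps)"
proof -
  have "Inv (n # m # ps)" using assms(3)
  proof (induction ps rule: rev_induct)
    case Nil
    show ?case using base[OF assms(1,2,4)] by simp
  next
    case (snoc p ps)
    then have "Inv (n # m # ps)" "0 < p" by auto
    then show ?case using step[of "n # m # ps" p] by simp
  qed
  then show ?thesis by (rule Inv_ckt)
qed

end
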